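(* Let $G$ be a unit square graph with realization $f$, let $\mathcal{P}$ be a clique-partition of $V(G)$, and let $\simeq$ be as defined in the context. Then for every $\simeq$-equivalence class $\mathcal{C}\subseteq\mathcal{M}(G)$ there is $b\in\{-1,1\}$ such that for all distinct $C,D\in\mathcal{C}$: every element of $z_f(C)_1$ is smaller than every element of $z_f(D)_1$ if and only if every element of $b\cdot z_f(C)_2$ is smaller than every element of $b\cdot z_f(D)_2$ (where $b\cdot S=\{bs\mid s\in S\}$).
   Context: A realization of $G$ is $f\colon V(G)\to\mathbb{R}^2$ with $vw\in E(G)$ iff $\|f(v)-f(w)\|_\infty\le1$ for distinct $v,w$; a unit square graph is a graph with a realization. A clique-partition is a partition of $V(G)$ into cliques. $\mathcal{M}(G)$ is the set of maximal cliques. $G^*_{\mathcal{M}}$ is the graph on $V(G)\sqcup\mathcal{M}(G)$ with edge set $E(G)\cup\{vC\mid C\in\mathcal{M}(G),v\in C\}$. A partition $\mathcal{Q}$ of the vertex set of a graph $H$ is stable if for all $X,Y\in\mathcal{Q}$ and $v,w\in X$, $|N_H(v)\cap Y|=|N_H(w)\cap Y|$. $\simeq$ is the equivalence relation whose classes form the coarsest partition of $V(G)\cup\mathcal{M}(G)$ that is stable with respect to $G^*_{\mathcal{M}}$ and refines $\mathcal{P}\cup\{\mathcal{M}(G)\}$. The center of a maximal clique $C$ is $z_f(C)=\{p\in\mathbb{R}^2\mid\forall v\in C:\|f(v)-p\|_\infty\le\tfrac12\}$ (a nonempty axis-parallel rectangle), and $z_f(C)_i$ is its projection to coordinate $i$;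 for distinct $\simeq$-equivalent maximal cliques these projections are disjoint intervals. *)

theory Defs
  imports Complex_Main "HOL-Library.Disjoint_Sets"
begin

definition graph :: "'a set \<Rightarrow> ('a \<Rightarrow> 'a \<Rightarrow> bool) \<Rightarrow> bool" where
  "graph V E \<longleftrightarrow> finite V \<and> (\<forall>v w. E v w \<longrightarrow> v \<in> V \<and> w \<in> V) \<and>
     (\<forall>v w. E v w \<longrightarrow> E w v) \<and> (\<forall>v. \<not> E v v)"

definition dist_inf :: "real \<times> real \<Rightarrow> real \<times> real \<Rightarrow> real" where
  "dist_inf p q = max \<bar>fst p - fst q\<bar> \<bar>snd p - snd q\<bar>"

definition realization :: "'a set \<Rightarrow> ('a \<Rightarrow> 'a \<Rightarrow> bool) \<Rightarrow> ('a \<Rightarrow> real \<times> real) \<Rightarrow> bool" where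
  "realization V E f \<longleftrightarrow>
     (\<forall>v\<in>V. \<forall>w\<in>V. v \<noteq> w \<longrightarrow> (E v w \<longleftrightarrow> dist_inf (f v) (f w) \<le> 1))"

definition clique :: "'a set \<Rightarrow> ('a \<Rightarrow> 'a \<Rightarrow> bool) \<Rightarrow> 'a set \<Rightarrow> bool" where
  "clique V E C \<longleftrightarrow> C \<subseteq> V \<and> (\<forall>v\<in>C. \<forall>w\<in>C. v \<noteq> w \<longrightarrow> E v w)"

definition max_cliques :: "'a set \<Rightarrow> ('a \<Rightarrow> 'a \<Rightarrow> bool) \<Rightarrow> 'a set set" where
  "max_cliques V E = {C. clique V E C \<and> (\<forall>D. clique V E D \<and> C \<subseteq> D \<longrightarrow> D = C)}"

definition clique_partition :: "'a set \<Rightarrow> ('a \<Rightarrow> 'a \<Rightarrow> bool) \<Rightarrow> 'a set set \<Rightarrow> bool" where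
  "clique_partition V E P \<longleftrightarrow> partition_on V P \<and> (\<forall>X\<in>P. clique V E X)"

definition gstar_vertices :: "'a set \<Rightarrow> ('a \<Rightarrow> 'a \<Rightarrow> bool) \<Rightarrow> ('a + 'a set) set" where
  "gstar_vertices V E = Inl ` V \<union> Inr ` max_cliques V E"

fun gstar_edge :: "'a set \<Rightarrow> ('a \<Rightarrow> 'a \<Rightarrow> bool) \<Rightarrow> ('a + 'a set) \<Rightarrow> ('a + 'a set) \<Rightarrow> bool" where
  "gstar_edge V E (Inl v) (Inl w) = E v w"
| "gstar_edge V E (Inl v) (Inr C) = (C \<in> max_cliques V E \<and> v \<in> C)"
| "gstar_edge V E (Inr C) (Inl v) = (C \<in> max_cliques V E \<and> v \<in> C)"
| "gstar_edge V E (Inr C) (Inr D) = False"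

definition nbhd :: "'b set \<Rightarrow> ('b \<Rightarrow> 'b \<Rightarrow> bool) \<Rightarrow> 'b \<Rightarrow> 'b set" where
  "nbhd W H v = {w\<in>W. H v w}"

definition stable_partition :: "'b set \<Rightarrow> ('b \<Rightarrow> 'b \<Rightarrow> bool) \<Rightarrow> 'b set set \<Rightarrow> bool" where
  "stable_partition W H Q \<longleftrightarrow> partition_on W Q \<and>
     (\<forall>X\<in>Q. \<forall>Y\<in>Q. \<forall>v\<in>X. \<forall>w\<in>X. card (nbhd W H v \<inter> Y) = card (nbhd W H w \<inter> Y))"

definition refines :: "'b set set \<Rightarrow> 'b set set \<Rightarrow> bool" where
  "refines Q R \<longleftrightarrow> (\<forall>X\<in>Q. \<exists>Y\<in>R. X \<subseteq> Y)"

definition base_partition :: "'a set \<Rightarrow> ('a \<Rightarrow> 'a \<Rightarrow> bool) \<Rightarrow> 'a set set \<Rightarrow> ('a + 'a set) set set" where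
  "base_partition V E P = (\<lambda>X. Inl ` X) ` P \<union> {Inr ` max_cliques V E}"

text \<open>Q is the coarsest partition of V \<union> M(G) that is stable w.r.t. G*_M and refines P \<union> {M(G)};
  its blocks are the equivalence classes of \<simeq>.\<close>
definition simeq_partition :: "'a set \<Rightarrow> ('a \<Rightarrow> 'a \<Rightarrow> bool) \<Rightarrow> 'a set set \<Rightarrow> ('a + 'a set) set set \<Rightarrow> bool" where
  "simeq_partition V E P Q \<longleftrightarrow>
     stable_partition (gstar_vertices V E) (gstar_edge V E) Q \<and>
     refines Q (base_partition V E P) \<and>
     (\<forall>Q'. stable_partition (gstar_vertices V E) (gstar_edge V E) Q' \<and>
           refines Q' (base_partition V E P) \<longrightarrow> refines Q' Q)"

definition center :: "('a \<Rightarrow> real \<times> real) \<Rightarrow> 'a set \<Rightarrow> (real \<times> real) set" where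
  "center f C = {p. \<forall>v\<in>C. dist_inf (f v) p \<le> 1/2}"

end

theory Submission
  imports Defs
begin

definition rxy :: "'a set \<Rightarrow> ('a \<Rightarrow> 'a \<Rightarrow> bool) \<Rightarrow> ('a \<Rightarrow> real) \<Rightarrow> ('a \<Rightarrow> real) \<Rightarrow> bool" where
  "rxy V E X Y \<longleftrightarrow> (\<forall>v\<in>V. \<forall>w\<in>V. v \<noteq> w \<longrightarrow> (E v w \<longleftrightarrow> \<bar>X v - X w\<bar> \<le> 1 \<and> \<bar>Y v - Y w\<bar> \<le> 1))"

definition mx :: "('a \<Rightarrow> real) \<Rightarrow> 'a set \<Rightarrow> real" where "mx X C = Max (X ` C)"
definition nx :: "('a \<Rightarrow> real) \<Rightarrow> 'a set \<Rightarrow> real" where "nx X C = Min (X ` C)"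
definition sep :: "('a \<Rightarrow> real) \<Rightarrow> 'a set \<Rightarrow> 'a set \<Rightarrow> bool" where
  "sep X C D \<longleftrightarrow> nx X C + 1 < mx X D"

definition prof :: "'a set \<Rightarrow> ('a \<Rightarrow> 'a \<Rightarrow> bool) \<Rightarrow> 'a set set \<Rightarrow> bool" where
  "prof V E K \<longleftrightarrow> (\<forall>v\<in>V. \<exists>W. v \<in> W \<and> clique V E W \<and> (\<forall>C\<in>K. \<forall>D\<in>K. card (C \<inter> W) = card (D \<inter> W)))"

lemma rxy_swap: "rxy V E X Y \<Longrightarrow> rxy V E Y X"
  unfolding rxy_def by blast

lemma clique_close:
  assumes "rxy V E X Y" "clique V E W" "a \<in> W" "b \<in> W"
  shows "\<bar>X a - X b\<bar> \<le> 1 \<and> \<bar>Y a - Y b\<bar> \<le> 1"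
proof (cases "a = b")
  case True then show ?thesis by simp
next
  case False
  with assms have "E a b" "a \<in> V" "b \<in> V" unfolding clique_def by auto
  with assms(1) False show ?thesis unfolding rxy_def by blast
qed

lemma mx_ge: "finite C \<Longrightarrow> c \<in> C \<Longrightarrow> X c \<le> mx X C"
  unfolding mx_def by simp
lemma nx_le: "finite C \<Longrightarrow> c \<in> C \<Longrightarrow> nx X C \<le> X c"
  unfolding nx_def by simp
lemma mx_in: assumes "finite C" "C \<noteq> {}" shows "\<exists>c\<in>C. X c = mx X C"
proof -
  have "Max (X ` C) \<in> X ` C" using assms by (intro Max_in) auto
  then obtain c where "c \<in> C" "Max (X ` C) = X c" by blast
  then show ?thesis unfolding mx_def by metis
qed
lemma nx_in: assumes "finite C" "C \<noteq> {}" shows "\<exists>c\<in>C. X c = nx X C"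
proof -
  have "Min (X ` C) \<in> X ` C" using assms by (intro Min_in) auto
  then obtain c where "c \<in> C" "Min (X ` C) = X c" by blast
  then show ?thesis unfolding nx_def by metis
qed

lemma span:
  assumes "rxy V E X Y" "clique V E C" "finite C" "C \<noteq> {}"
  shows "mx X C \<le> nx X C + 1"
proof -
  obtain c1 where "c1 \<in> C" "X c1 = mx X C" using mx_in assms by blast
  obtain c2 where "c2 \<in> C" "X c2 = nx X C" using nx_in assms by blast
  have "\<bar>X c1 - X c2\<bar> \<le> 1" using clique_close[OF assms(1,2)] \<open>c1\<in>C\<close> \<open>c2\<in>C\<close> by blast
  then show ?thesis using \<open>X c1 = _\<close> \<open>X c2 = _\<close> by linarith
qed

lemma max_clique_clique: "C \<in> max_cliques V E \<Longrightarrow> clique V E C"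
  unfolding max_cliques_def by simp

lemma mc_char:
  assumes "rxy V E X Y" "C \<in> max_cliques V E" "finite V" "C \<noteq> {}"
  shows "w \<in> C \<longleftrightarrow> (w \<in> V \<and> mx X C - 1 \<le> X w \<and> X w \<le> nx X C + 1 \<and> mx Y C - 1 \<le> Y w \<and> Y w \<le> nx Y C + 1)"
proof -
  have cl: "clique V E C" using assms(2) max_clique_clique by blast
  have CV: "C \<subseteq> V" using cl unfolding clique_def by blast
  have fin: "finite C" using CV assms(3) finite_subset by blast
  have sx: "mx X C \<le> nx X C + 1" using span[OF assms(1) cl fin assms(4)] .
  have sy: "mx Y C \<le> nx Y C + 1" using span[OF rxy_swap[OF assms(1)] cl fin assms(4)] .
  show ?thesis
  proof
    assume "w \<in> C"
    then show "w \<in> V \<and> mx X C - 1 \<le> X w \<and> X w \<le> nx X C + 1 \<and> mx Y C - 1 \<le> Y w \<and> Y w \<le> nx Y C + 1"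
      using CV mx_ge[OF fin, of w X] nx_le[OF fin, of w X] mx_ge[OF fin, of w Y] nx_le[OF fin, of w Y] sx sy
      by auto
  next
    assume h: "w \<in> V \<and> mx X C - 1 \<le> X w \<and> X w \<le> nx X C + 1 \<and> mx Y C - 1 \<le> Y w \<and> Y w \<le> nx Y C + 1"
    show "w \<in> C"
    proof (rule ccontr)
      assume "w \<notin> C"
      have "clique V E (insert w C)"
        unfolding clique_def
      proof (intro conjI ballI impI)
        show "insert w C \<subseteq> V" using h CV by blast
      next
        fix a b assume a: "a \<in> insert w C" and b: "b \<in> insert w C" and ab: "a \<noteq> b"
        show "E a b"
        proof (cases "a = w")
          case True
          then have "b \<in> C" using b ab by blast
          then have "\<bar>X a - X b\<bar> \<le> 1 \<and> \<bar>Y a - Y b\<bar> \<le> 1"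
            using True h mx_ge[OF fin, of b X] nx_le[OF fin, of b X] mx_ge[OF fin, of b Y] nx_le[OF fin, of b Y]
            by auto
          then show ?thesis using assms(1) ab True h \<open>b\<in>C\<close> CV unfolding rxy_def by blast
        next
          case False
          then have aC: "a \<in> C" using a by blast
          show ?thesis
          proof (cases "b = w")
            case True
            then have "\<bar>X a - X b\<bar> \<le> 1 \<and> \<bar>Y a - Y b\<bar> \<le> 1"
              using h mx_ge[OF fin aC, of X] nx_le[OF fin aC, of X] mx_ge[OF fin aC, of Y] nx_le[OF fin aC, of Y]
              by auto
            then show ?thesis using assms(1) ab True h aC CV unfolding rxy_def by blast
          next
            case False
            then have "b \<in> C" using b by blast
            then show ?thesis using cl aC ab unfolding clique_def by blast
          qed
        qed
      qed
      then have "insert w C = C" using assms(2) unfolding max_cliques_def by blast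
      then show False using \<open>w \<notin> C\<close> by blast
    qed
  qed
qed

lemma card_lemma:
  assumes "finite W" "card (A \<inter> W) = card (B \<inter> W)" "e \<in> W" "e \<in> A" "e \<notin> B"
  shows "\<exists>b\<in>W. b \<in> B \<and> b \<notin> A"
proof (rule ccontr)
  assume "\<not> ?thesis"
  then have "B \<inter> W \<subseteq> (A \<inter> W) - {e}" using assms by blast
  then have "card (B \<inter> W) \<le> card ((A \<inter> W) - {e})" using assms(1) by (intro card_mono) auto
  also have "\<dots> < card (A \<inter> W)" using assms by (intro card_Diff1_less) auto
  finally show False using assms(2) by simp
qed


definition conc :: "('a \<Rightarrow> real) \<Rightarrow> ('a \<Rightarrow> real) \<Rightarrow> 'a set \<Rightarrow> 'a set \<Rightarrow> bool" where
  "conc X Y u v \<longleftrightarrow> (sep X u v \<longleftrightarrow> sep Y u v)"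

context
  fixes V :: "'a set" and E :: "'a \<Rightarrow> 'a \<Rightarrow> bool" and K :: "'a set set"
  assumes finV: "finite V" and KM: "K \<subseteq> max_cliques V E" and hprof: "prof V E K" and Vne: "V \<noteq> {}"
begin

lemma K_ne: "C \<in> K \<Longrightarrow> C \<noteq> {}"
proof
  assume "C \<in> K" "C = {}"
  obtain v where "v \<in> V" using Vne by blast
  have "clique V E {v}" using \<open>v\<in>V\<close> unfolding clique_def by blast
  moreover have "C \<in> max_cliques V E" using \<open>C\<in>K\<close> KM by blast
  ultimately have "{v} = C" unfolding max_cliques_def using \<open>C = {}\<close> by blast
  then show False using \<open>C = {}\<close> by blast
qed

lemma K_mc: "C \<in> K \<Longrightarrow> C \<in> max_cliques V E" using KM by blast

lemma K_cl: "C \<in> K \<Longrightarrow> clique V E C" using KM max_clique_clique by blast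

lemma K_sub: "C \<in> K \<Longrightarrow> C \<subseteq> V" using K_cl unfolding clique_def by blast

lemma K_fin: assumes "C \<in> K" shows "finite C"
proof -
  have "C \<subseteq> V" using K_cl[OF assms] unfolding clique_def by blast
  then show ?thesis using finV by (rule finite_subset)
qed

lemma K_char: "rxy V E X Y \<Longrightarrow> C \<in> K \<Longrightarrow> w \<in> C \<longleftrightarrow> (w \<in> V \<and> mx X C - 1 \<le> X w \<and> X w \<le> nx X C + 1 \<and> mx Y C - 1 \<le> Y w \<and> Y w \<le> nx Y C + 1)"
  by (rule mc_char[OF _ K_mc finV K_ne])

lemma K_span: assumes "rxy V E X Y" "C \<in> K" shows "mx X C \<le> nx X C + 1"
  using span[OF assms(1) K_cl[OF assms(2)] K_fin[OF assms(2)] K_ne[OF assms(2)]] .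

lemma K_bounds: assumes "C \<in> K" "c \<in> C" shows "nx X C \<le> X c \<and> X c \<le> mx X C"
  using mx_ge[OF K_fin[OF assms(1)] assms(2)] nx_le[OF K_fin[OF assms(1)] assms(2)] by blast

lemma getW: assumes "v \<in> V"
  obtains W where "v \<in> W" "clique V E W" "finite W" "\<And>C D. C \<in> K \<Longrightarrow> D \<in> K \<Longrightarrow> card (C \<inter> W) = card (D \<inter> W)"
proof -
  obtain W where W1: "v \<in> W" and W2: "clique V E W" and W3: "\<forall>C\<in>K. \<forall>D\<in>K. card (C \<inter> W) = card (D \<inter> W)"
    using hprof assms unfolding prof_def by blast
  have "W \<subseteq> V" using W2 unfolding clique_def by blast
  then have W4: "finite W" using finV by (rule finite_subset)
  show ?thesis
  proof (rule that[OF W1 W2 W4])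
    fix C D assume "C \<in> K" "D \<in> K"
    then show "card (C \<inter> W) = card (D \<inter> W)" using W3 by blast
  qed
qed

lemma pair_aux:
  assumes r: "rxy V E X Y" and C: "C \<in> K" and D: "D \<in> K"
    and n1: "\<not> sep X C D" and n2: "\<not> sep X D C" and s: "sep Y C D"
  shows False
proof -
  have ry: "rxy V E Y X" using rxy_swap[OF r] .
  obtain c where c: "c \<in> C" "Y c = nx Y C" using nx_in[OF K_fin[OF C] K_ne[OF C], of Y] by blast
  have cV: "c \<in> V" using K_sub[OF C] c by blast
  have "c \<notin> D"
  proof
    assume "c \<in> D"
    then have "mx Y D - 1 \<le> Y c" using K_char[OF r D, of c] by blast
    then show False using s c unfolding sep_def by linarith
  qed
  obtain W where W: "c \<in> W" "clique V E W" "finite W" "\<And>C D. C \<in> K \<Longrightarrow> D \<in> K \<Longrightarrow> card (C \<inter> W) = card (D \<inter> W)"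
    using getW cV by blast
  obtain w where w: "w \<in> W" "w \<in> D" "w \<notin> C"
    using card_lemma[OF W(3) W(4)[OF C D] W(1) c(1) \<open>c \<notin> D\<close>] by blast
  have cw: "\<bar>Y c - Y w\<bar> \<le> 1" using clique_close[OF r W(2) W(1) w(1)] by blast
  have b1: "nx X D \<le> X w \<and> X w \<le> mx X D" using K_bounds[OF D w(2)] .
  have b2: "nx Y D \<le> Y w \<and> Y w \<le> mx Y D" using K_bounds[OF D w(2)] .
  have wV: "w \<in> V" using K_sub[OF D] w(2) by blast
  have sD: "mx Y D \<le> nx Y D + 1" using K_span[OF ry D] .
  have sC: "mx Y C \<le> nx Y C + 1" using K_span[OF ry C] .
  have n1': "mx X D \<le> nx X C + 1" using n1 unfolding sep_def by simp
  have n2': "mx X C \<le> nx X D + 1" using n2 unfolding sep_def by simp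
  have s': "nx Y C + 1 < mx Y D" using s unfolding sep_def by simp
  have x1: "nx X D \<le> X w" "X w \<le> mx X D" using b1 by auto
  have y1: "nx Y D \<le> Y w" using b2 by auto
  have cw': "Y w \<le> Y c + 1" using cw by linarith
  have "mx X C - 1 \<le> X w" using n2' x1(1) by linarith
  moreover have "X w \<le> nx X C + 1" using n1' x1(2) by linarith
  moreover have "mx Y C - 1 \<le> Y w" using y1 sD s' sC by linarith
  moreover have "Y w \<le> nx Y C + 1" using cw' c(2) by linarith
  ultimately have "mx X C - 1 \<le> X w" "X w \<le> nx X C + 1" "mx Y C - 1 \<le> Y w" "Y w \<le> nx Y C + 1" by auto
  then have "w \<in> C" using K_char[OF r C, of w] wV by blast
  then show False using w by blast
qed

lemma pair_eq_sub:
  assumes r: "rxy V E X Y" and C: "C \<in> K" and D: "D \<in> K"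
    and n1: "\<not> sep X C D" and n2: "\<not> sep X D C" and n3: "\<not> sep Y C D" and n4: "\<not> sep Y D C"
  shows "D \<subseteq> C"
proof
  fix w assume w: "w \<in> D"
  have b1: "nx X D \<le> X w \<and> X w \<le> mx X D" using K_bounds[OF D w] .
  have b2: "nx Y D \<le> Y w \<and> Y w \<le> mx Y D" using K_bounds[OF D w] .
  have wV: "w \<in> V" using K_sub[OF D] w by blast
  have n1': "mx X D \<le> nx X C + 1" using n1 unfolding sep_def by simp
  have n2': "mx X C \<le> nx X D + 1" using n2 unfolding sep_def by simp
  have n3': "mx Y D \<le> nx Y C + 1" using n3 unfolding sep_def by simp
  have n4': "mx Y C \<le> nx Y D + 1" using n4 unfolding sep_def by simp
  have x1: "nx X D \<le> X w" "X w \<le> mx X D" using b1 by auto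
  have y1: "nx Y D \<le> Y w" "Y w \<le> mx Y D" using b2 by auto
  have "mx X C - 1 \<le> X w" using n2' x1(1) by linarith
  moreover have "X w \<le> nx X C + 1" using n1' x1(2) by linarith
  moreover have "mx Y C - 1 \<le> Y w" using n4' y1(1) by linarith
  moreover have "Y w \<le> nx Y C + 1" using n3' y1(2) by linarith
  ultimately have "mx X C - 1 \<le> X w" "X w \<le> nx X C + 1" "mx Y C - 1 \<le> Y w" "Y w \<le> nx Y C + 1" by auto
  then show "w \<in> C" using K_char[OF r C, of w] wV by blast
qed

lemma pair_sepX:
  assumes r: "rxy V E X Y" and C: "C \<in> K" and D: "D \<in> K" and ne: "C \<noteq> D"
  shows "sep X C D \<or> sep X D C"
proof (rule ccontr)
  assume h: "\<not> (sep X C D \<or> sep X D C)"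
  show False
  proof (cases "sep Y C D")
    case True then show False using pair_aux[OF r C D] h by blast
  next
    case False
    show False
    proof (cases "sep Y D C")
      case True then show False using pair_aux[OF r D C] h by blast
    next
      case False2: False
      have "D \<subseteq> C" using pair_eq_sub[OF r C D] h False False2 by blast
      moreover have "C \<subseteq> D" using pair_eq_sub[OF r D C] h False False2 by blast
      ultimately show False using ne by blast
    qed
  qed
qed

lemma pair_sepY:
  assumes r: "rxy V E X Y" and C: "C \<in> K" and D: "D \<in> K" and ne: "C \<noteq> D"
  shows "sep Y C D \<or> sep Y D C"
  using pair_sepX[OF rxy_swap[OF r] C D ne] .

lemma sep_asym: assumes r: "rxy V E X Y" and C: "C \<in> K" and D: "D \<in> K" and s: "sep X C D"
  shows "\<not> sep X D C"
proof -
  have "mx X C \<le> nx X C + 1" "mx X D \<le> nx X D + 1" using K_span[OF r C] K_span[OF r D] by auto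
  then show ?thesis using s unfolding sep_def by linarith
qed

lemma sep_trans: assumes r: "rxy V E X Y" and B: "B \<in> K" and s1: "sep X A B" and s2: "sep X B C"
  shows "sep X A C"
proof -
  have "mx X B \<le> nx X B + 1" using K_span[OF r B] .
  then show ?thesis using s1 s2 unfolding sep_def by linarith
qed


lemma core1:
  assumes r: "rxy V E X Y" and C: "C \<in> K" and D: "D \<in> K" and F: "F \<in> K"
    and a1: "sep X C F" and a2: "sep X D F" and a3: "sep Y C F" and a4: "sep Y F D"
  shows False
proof -
  have ry: "rxy V E Y X" using rxy_swap[OF r] .
  obtain e where e: "e \<in> F" "X e = mx X F" using mx_in[OF K_fin[OF F] K_ne[OF F], of X] by blast
  have eV: "e \<in> V" using K_sub[OF F] e(1) by blast
  have a1': "nx X C + 1 < mx X F" using a1 unfolding sep_def .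
  have a2': "nx X D + 1 < mx X F" using a2 unfolding sep_def .
  have a3': "nx Y C + 1 < mx Y F" using a3 unfolding sep_def .
  have a4': "nx Y F + 1 < mx Y D" using a4 unfolding sep_def .
  have "e \<notin> C"
  proof
    assume "e \<in> C"
    then have "X e \<le> nx X C + 1" using K_char[OF r C, of e] by blast
    then show False using a1' e(2) by linarith
  qed
  have "e \<notin> D"
  proof
    assume "e \<in> D"
    then have "X e \<le> nx X D + 1" using K_char[OF r D, of e] by blast
    then show False using a2' e(2) by linarith
  qed
  obtain W where W: "e \<in> W" "clique V E W" "finite W" "\<And>C D. C \<in> K \<Longrightarrow> D \<in> K \<Longrightarrow> card (C \<inter> W) = card (D \<inter> W)"
    using getW eV by blast
  obtain c where c: "c \<in> W" "c \<in> C" "c \<notin> F"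
    using card_lemma[OF W(3) W(4)[OF F C] W(1) e(1) \<open>e \<notin> C\<close>] by blast
  obtain d where d: "d \<in> W" "d \<in> D" "d \<notin> F"
    using card_lemma[OF W(3) W(4)[OF F D] W(1) e(1) \<open>e \<notin> D\<close>] by blast
  have ce: "\<bar>X c - X e\<bar> \<le> 1" using clique_close[OF r W(2) c(1) W(1)] by blast
  have de: "\<bar>X d - X e\<bar> \<le> 1" using clique_close[OF r W(2) d(1) W(1)] by blast
  have cd: "\<bar>Y c - Y d\<bar> \<le> 1" using clique_close[OF r W(2) c(1) d(1)] by blast
  have spXF: "mx X F \<le> nx X F + 1" using K_span[OF r F] .
  have spYF: "mx Y F \<le> nx Y F + 1" using K_span[OF ry F] .
  have cV: "c \<in> V" using K_sub[OF C] c(2) by blast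
  have dV: "d \<in> V" using K_sub[OF D] d(2) by blast
  have cXu: "X c \<le> nx X C + 1" using K_char[OF r C, of c] c(2) by blast
  have cYu: "Y c \<le> nx Y C + 1" using K_char[OF r C, of c] c(2) by blast
  have dXu: "X d \<le> nx X D + 1" using K_char[OF r D, of d] d(2) by blast
  have dYl: "mx Y D - 1 \<le> Y d" using K_char[OF r D, of d] d(2) by blast
  have c_low: "Y c < mx Y F - 1"
  proof (rule ccontr)
    assume "\<not> ?thesis"
    then have "mx Y F - 1 \<le> Y c" by simp
    moreover have "mx X F - 1 \<le> X c" using ce e(2) by linarith
    moreover have "X c \<le> nx X F + 1" using cXu a1' spXF by linarith
    moreover have "Y c \<le> nx Y F + 1" using cYu a3' spYF by linarith
    ultimately have "c \<in> F" using K_char[OF r F, of c] cV by blast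
    then show False using c(3) by blast
  qed
  have d_high: "nx Y F + 1 < Y d"
  proof (rule ccontr)
    assume "\<not> ?thesis"
    then have "Y d \<le> nx Y F + 1" by simp
    moreover have "mx X F - 1 \<le> X d" using de e(2) by linarith
    moreover have "X d \<le> nx X F + 1" using dXu a2' spXF by linarith
    moreover have "mx Y F - 1 \<le> Y d" using dYl a4' spYF by linarith
    ultimately have "d \<in> F" using K_char[OF r F, of d] dV by blast
    then show False using d(3) by blast
  qed
  have "Y d - Y c \<le> 1" using cd by linarith
  then show False using c_low d_high spYF by linarith
qed

lemma core2:
  assumes r: "rxy V E X Y" and C: "C \<in> K" and D: "D \<in> K" and F: "F \<in> K"
    and a1: "sep X F C" and a2: "sep X F D" and a3: "sep Y C F" and a4: "sep Y F D"
  shows False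
proof -
  have ry: "rxy V E Y X" using rxy_swap[OF r] .
  obtain e where e: "e \<in> F" "X e = nx X F" using nx_in[OF K_fin[OF F] K_ne[OF F], of X] by blast
  have eV: "e \<in> V" using K_sub[OF F] e(1) by blast
  have a1': "nx X F + 1 < mx X C" using a1 unfolding sep_def .
  have a2': "nx X F + 1 < mx X D" using a2 unfolding sep_def .
  have a3': "nx Y C + 1 < mx Y F" using a3 unfolding sep_def .
  have a4': "nx Y F + 1 < mx Y D" using a4 unfolding sep_def .
  have "e \<notin> C"
  proof
    assume "e \<in> C"
    then have "mx X C - 1 \<le> X e" using K_char[OF r C, of e] by blast
    then show False using a1' e(2) by linarith
  qed
  have "e \<notin> D"
  proof
    assume "e \<in> D"
    then have "mx X D - 1 \<le> X e" using K_char[OF r D, of e] by blast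
    then show False using a2' e(2) by linarith
  qed
  obtain W where W: "e \<in> W" "clique V E W" "finite W" "\<And>C D. C \<in> K \<Longrightarrow> D \<in> K \<Longrightarrow> card (C \<inter> W) = card (D \<inter> W)"
    using getW eV by blast
  obtain c where c: "c \<in> W" "c \<in> C" "c \<notin> F"
    using card_lemma[OF W(3) W(4)[OF F C] W(1) e(1) \<open>e \<notin> C\<close>] by blast
  obtain d where d: "d \<in> W" "d \<in> D" "d \<notin> F"
    using card_lemma[OF W(3) W(4)[OF F D] W(1) e(1) \<open>e \<notin> D\<close>] by blast
  have ce: "\<bar>X c - X e\<bar> \<le> 1" using clique_close[OF r W(2) c(1) W(1)] by blast
  have de: "\<bar>X d - X e\<bar> \<le> 1" using clique_close[OF r W(2) d(1) W(1)] by blast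
  have cd: "\<bar>Y c - Y d\<bar> \<le> 1" using clique_close[OF r W(2) c(1) d(1)] by blast
  have spXF: "mx X F \<le> nx X F + 1" using K_span[OF r F] .
  have spYF: "mx Y F \<le> nx Y F + 1" using K_span[OF ry F] .
  have cV: "c \<in> V" using K_sub[OF C] c(2) by blast
  have dV: "d \<in> V" using K_sub[OF D] d(2) by blast
  have cXl: "mx X C - 1 \<le> X c" using K_char[OF r C, of c] c(2) by blast
  have cYu: "Y c \<le> nx Y C + 1" using K_char[OF r C, of c] c(2) by blast
  have dXl: "mx X D - 1 \<le> X d" using K_char[OF r D, of d] d(2) by blast
  have dYl: "mx Y D - 1 \<le> Y d" using K_char[OF r D, of d] d(2) by blast
  have c_low: "Y c < mx Y F - 1"
  proof (rule ccontr)
    assume "\<not> ?thesis"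
    then have "mx Y F - 1 \<le> Y c" by simp
    moreover have "X c \<le> nx X F + 1" using ce e(2) by linarith
    moreover have "mx X F - 1 \<le> X c" using cXl a1' spXF by linarith
    moreover have "Y c \<le> nx Y F + 1" using cYu a3' spYF by linarith
    ultimately have "c \<in> F" using K_char[OF r F, of c] cV by blast
    then show False using c(3) by blast
  qed
  have d_high: "nx Y F + 1 < Y d"
  proof (rule ccontr)
    assume "\<not> ?thesis"
    then have "Y d \<le> nx Y F + 1" by simp
    moreover have "X d \<le> nx X F + 1" using de e(2) by linarith
    moreover have "mx X F - 1 \<le> X d" using dXl a2' spXF by linarith
    moreover have "mx Y F - 1 \<le> Y d" using dYl a4' spYF by linarith
    ultimately have "d \<in> F" using K_char[OF r F, of d] dV by blast
    then show False using d(3) by blast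
  qed
  have "Y d - Y c \<le> 1" using cd by linarith
  then show False using c_low d_high spYF by linarith
qed

lemma mono3:
  assumes r: "rxy V E X Y" and p: "p \<in> K" and q: "q \<in> K" and t: "t \<in> K"
    and pq: "p \<noteq> q" and qt: "q \<noteq> t" and pt: "p \<noteq> t"
    and s1: "sep X p q" and s2: "sep X q t"
  shows "(sep Y p q \<and> sep Y q t) \<or> (sep Y q p \<and> sep Y t q)"
proof -
  have ry: "rxy V E Y X" using rxy_swap[OF r] .
  have s3: "sep X p t" using sep_trans[OF r q s1 s2] .
  have t1: "sep Y p q \<or> sep Y q p" using pair_sepY[OF r p q pq] .
  have t2: "sep Y q t \<or> sep Y t q" using pair_sepY[OF r q t qt] .
  have t3: "sep Y p t \<or> sep Y t p" using pair_sepY[OF r p t pt] .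
  have c1: "\<not> (sep Y p t \<and> sep Y t q)" using core1[OF r p q t s3 s2] by blast
  have c2: "\<not> (sep Y q t \<and> sep Y t p)" using core1[OF r q p t s2 s3] by blast
  have c3: "\<not> (sep Y q p \<and> sep Y p t)" using core2[OF r q t p s1 s3] by blast
  have c4: "\<not> (sep Y t p \<and> sep Y p q)" using core2[OF r t q p s3 s1] by blast
  show ?thesis
  proof (cases "sep Y p q")
    case True
    show ?thesis
    proof (cases "sep Y q t")
      case True2: True
      then show ?thesis using True by simp
    next
      case False
      then have "sep Y t q" using t2 by simp
      show ?thesis
      proof (cases "sep Y p t")
        case True3: True
        then show ?thesis using c1 \<open>sep Y t q\<close> by simp
      next
        case False3: False
        then have "sep Y t p" using t3 by simp
        then show ?thesis using c4 True by simp
      qed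
    qed
  next
    case False
    then have "sep Y q p" using t1 by simp
    show ?thesis
    proof (cases "sep Y t q")
      case True2: True
      then show ?thesis using \<open>sep Y q p\<close> by simp
    next
      case False2: False
      then have "sep Y q t" using t2 by simp
      show ?thesis
      proof (cases "sep Y p t")
        case True3: True
        then show ?thesis using c3 \<open>sep Y q p\<close> by simp
      next
        case False3: False
        then have "sep Y t p" using t3 by simp
        then show ?thesis using c2 \<open>sep Y q t\<close> by simp
      qed
    qed
  qed
qed

lemma conc_sym:
  assumes r: "rxy V E X Y" and u: "u \<in> K" and v: "v \<in> K" and uv: "u \<noteq> v"
  shows "conc X Y u v \<longleftrightarrow> conc X Y v u"
proof -
  have ry: "rxy V E Y X" using rxy_swap[OF r] .
  have "sep X u v \<or> sep X v u" using pair_sepX[OF r u v uv] .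
  moreover have "sep Y u v \<or> sep Y v u" using pair_sepY[OF r u v uv] .
  moreover have "sep X u v \<Longrightarrow> \<not> sep X v u" using sep_asym[OF r u v] by blast
  moreover have "sep Y u v \<Longrightarrow> \<not> sep Y v u" using sep_asym[OF ry u v] by blast
  ultimately show ?thesis unfolding conc_def by blast
qed

lemma same3:
  assumes r: "rxy V E X Y" and p: "p \<in> K" and q: "q \<in> K" and t: "t \<in> K"
    and pq: "p \<noteq> q" and qt: "q \<noteq> t" and pt: "p \<noteq> t"
  shows "conc X Y p q \<longleftrightarrow> conc X Y p t"
proof -
  have ry: "rxy V E Y X" using rxy_swap[OF r] .
  have x1: "sep X p q \<or> sep X q p" using pair_sepX[OF r p q pq] .
  have x2: "sep X q t \<or> sep X t q" using pair_sepX[OF r q t qt] .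
  have x3: "sep X p t \<or> sep X t p" using pair_sepX[OF r p t pt] .
  have y1: "sep Y p q \<longleftrightarrow> \<not> sep Y q p" using pair_sepY[OF r p q pq] sep_asym[OF ry p q] by blast
  have y2: "sep Y q t \<longleftrightarrow> \<not> sep Y t q" using pair_sepY[OF r q t qt] sep_asym[OF ry q t] by blast
  have y3: "sep Y p t \<longleftrightarrow> \<not> sep Y t p" using pair_sepY[OF r p t pt] sep_asym[OF ry p t] by blast
  have z1: "sep X p q \<longleftrightarrow> \<not> sep X q p" using x1 sep_asym[OF r p q] by blast
  have z2: "sep X q t \<longleftrightarrow> \<not> sep X t q" using x2 sep_asym[OF r q t] by blast
  have z3: "sep X p t \<longleftrightarrow> \<not> sep X t p" using x3 sep_asym[OF r p t] by blast
  have m1: "sep X p q \<Longrightarrow> sep X q t \<Longrightarrow> (sep Y p q \<and> sep Y q t) \<or> (sep Y q p \<and> sep Y t q)"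
    using mono3[OF r p q t pq qt pt] by blast
  have m2: "sep X p t \<Longrightarrow> sep X t q \<Longrightarrow> (sep Y p t \<and> sep Y t q) \<or> (sep Y t p \<and> sep Y q t)"
    using mono3[OF r p t q pt qt[symmetric] pq] by blast
  have m3: "sep X q p \<Longrightarrow> sep X p t \<Longrightarrow> (sep Y q p \<and> sep Y p t) \<or> (sep Y p q \<and> sep Y t p)"
    using mono3[OF r q p t pq[symmetric] pt qt] by blast
  have m4: "sep X q t \<Longrightarrow> sep X t p \<Longrightarrow> (sep Y q t \<and> sep Y t p) \<or> (sep Y t q \<and> sep Y p t)"
    using mono3[OF r q t p qt pt[symmetric] pq[symmetric]] by blast
  have m5: "sep X t p \<Longrightarrow> sep X p q \<Longrightarrow> (sep Y t p \<and> sep Y p q) \<or> (sep Y p t \<and> sep Y q p)"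
    using mono3[OF r t p q pt[symmetric] pq qt[symmetric]] by blast
  have m6: "sep X t q \<Longrightarrow> sep X q p \<Longrightarrow> (sep Y t q \<and> sep Y q p) \<or> (sep Y q t \<and> sep Y p q)"
    using mono3[OF r t q p qt[symmetric] pq[symmetric] pt[symmetric]] by blast
  have tXq: "\<And>a c. sep X a q \<Longrightarrow> sep X q c \<Longrightarrow> sep X a c" using sep_trans[OF r q] by blast
  have tXt: "\<And>a c. sep X a t \<Longrightarrow> sep X t c \<Longrightarrow> sep X a c" using sep_trans[OF r t] by blast
  have tYq: "\<And>a c. sep Y a q \<Longrightarrow> sep Y q c \<Longrightarrow> sep Y a c" using sep_trans[OF ry q] by blast
  have tYt: "\<And>a c. sep Y a t \<Longrightarrow> sep Y t c \<Longrightarrow> sep Y a c" using sep_trans[OF ry t] by blast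
  consider (o1) "sep X p q" "sep X q t" | (o2) "sep X p t" "sep X t q" | (o3) "sep X q p" "sep X p t"
    | (o4) "sep X q t" "sep X t p" | (o5) "sep X t p" "sep X p q" | (o6) "sep X t q" "sep X q p"
  proof -
    show thesis
    proof (cases "sep X p q")
      case True
      show thesis
      proof (cases "sep X q t")
        case True2: True then show thesis using True o1 by simp
      next
        case False then have "sep X t q" using x2 by simp
        show thesis
        proof (cases "sep X p t")
          case True3: True then show thesis using o2 \<open>sep X t q\<close> by simp
        next
          case False3: False then have "sep X t p" using x3 by simp
          then show thesis using o5 True by simp
        qed
      qed
    next
      case False
      then have "sep X q p" using x1 by simp
      show thesis
      proof (cases "sep X t q")
        case True2: True then show thesis using o6 \<open>sep X q p\<close> by simp
      next
        case False2: False then have "sep X q t" using x2 by simp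
        show thesis
        proof (cases "sep X p t")
          case True3: True then show thesis using o3 \<open>sep X q p\<close> by simp
        next
          case False3: False then have "sep X t p" using x3 by simp
          then show thesis using o4 \<open>sep X q t\<close> by simp
        qed
      qed
    qed
  qed
  then show ?thesis
  proof cases
    case o1
    have "sep X p t" using tXq o1 by blast
    from m1[OF o1] show ?thesis
    proof
      assume "sep Y p q \<and> sep Y q t"
      then have "sep Y p t" using tYq by blast
      then show ?thesis unfolding conc_def using \<open>sep Y p q \<and> sep Y q t\<close> o1 \<open>sep X p t\<close> by blast
    next
      assume h: "sep Y q p \<and> sep Y t q"
      then have "sep Y t p" using tYq by blast
      then show ?thesis unfolding conc_def using h y1 y3 o1 \<open>sep X p t\<close> by blast
    qed
  next
    case o2
    have "sep X p q" using tXt o2 by blast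
    from m2[OF o2] show ?thesis
    proof
      assume h: "sep Y p t \<and> sep Y t q"
      then have "sep Y p q" using tYt by blast
      then show ?thesis unfolding conc_def using h o2 \<open>sep X p q\<close> by blast
    next
      assume h: "sep Y t p \<and> sep Y q t"
      then have "sep Y q p" using tYt by blast
      then show ?thesis unfolding conc_def using h y1 y3 o2 \<open>sep X p q\<close> by blast
    qed
  next
    case o3
    have "\<not> sep X p q" using o3 z1 by blast
    from m3[OF o3] show ?thesis
    proof
      assume h: "sep Y q p \<and> sep Y p t"
      then show ?thesis unfolding conc_def using y1 o3 \<open>\<not> sep X p q\<close> by blast
    next
      assume h: "sep Y p q \<and> sep Y t p"
      then show ?thesis unfolding conc_def using y3 o3 \<open>\<not> sep X p q\<close> by blast
    qed
  next
    case o4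
    have "sep X q p" using tXt o4 by blast
    then have nx: "\<not> sep X p q" "\<not> sep X p t" using z1 z3 o4 by blast+
    from m4[OF o4] show ?thesis
    proof
      assume h: "sep Y q t \<and> sep Y t p"
      then have "sep Y q p" using tYt by blast
      then show ?thesis unfolding conc_def using h y1 y3 nx by blast
    next
      assume h: "sep Y t q \<and> sep Y p t"
      then have "sep Y p q" using tYt by blast
      then show ?thesis unfolding conc_def using h nx by blast
    qed
  next
    case o5
    have nx: "\<not> sep X p t" using z3 o5 by blast
    from m5[OF o5] show ?thesis
    proof
      assume h: "sep Y t p \<and> sep Y p q"
      then show ?thesis unfolding conc_def using y3 nx o5 by blast
    next
      assume h: "sep Y p t \<and> sep Y q p"
      then show ?thesis unfolding conc_def using y1 nx o5 by blast
    qed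
  next
    case o6
    have "sep X t p" using tXq o6 by blast
    then have nx: "\<not> sep X p q" "\<not> sep X p t" using z1 z3 o6 by blast+
    from m6[OF o6] show ?thesis
    proof
      assume h: "sep Y t q \<and> sep Y q p"
      then have "sep Y t p" using tYq by blast
      then show ?thesis unfolding conc_def using h y1 y3 nx by blast
    next
      assume h: "sep Y q t \<and> sep Y p q"
      then have "sep Y p t" using tYq by blast
      then show ?thesis unfolding conc_def using h nx by blast
    qed
  qed
qed

lemma conc_all:
  assumes r: "rxy V E X Y" and u: "u \<in> K" and v: "v \<in> K" and u': "u' \<in> K" and v': "v' \<in> K"
    and uv: "u \<noteq> v" and uv': "u' \<noteq> v'"
  shows "conc X Y u v = conc X Y u' v'"
proof (cases "v' = u")
  case True
  then have uu': "u' \<noteq> u" using uv' by simp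
  show ?thesis
  proof (cases "u' = v")
    case True2: True
    show ?thesis unfolding True True2 by (rule conc_sym[OF r u v uv])
  next
    case False
    have "conc X Y u v = conc X Y u u'" by (rule same3[OF r u v u' uv False[symmetric] uu'[symmetric]])
    also have "\<dots> = conc X Y u' u" by (rule conc_sym[OF r u u' uu'[symmetric]])
    finally show ?thesis unfolding True .
  qed
next
  case False
  have "conc X Y u v = conc X Y u v'"
  proof (cases "v' = v")
    case True then show ?thesis by simp
  next
    case False2: False
    show ?thesis by (rule same3[OF r u v v' uv False2[symmetric] False[symmetric]])
  qed
  also have "\<dots> = conc X Y v' u" by (rule conc_sym[OF r u v' False[symmetric]])
  also have "\<dots> = conc X Y v' u'"
  proof (cases "u' = u")
    case True then show ?thesis by simp
  next
    case False2: False
    show ?thesis by (rule same3[OF r v' u u' False False2[symmetric] uv'[symmetric]])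
  qed
  also have "\<dots> = conc X Y u' v'" by (rule conc_sym[OF r v' u' uv'[symmetric]])
  finally show ?thesis .
qed

end


lemma rxy_of_real: "realization V E f \<Longrightarrow> rxy V E (\<lambda>v. fst (f v)) (\<lambda>v. snd (f v))"
  unfolding realization_def rxy_def dist_inf_def by (auto simp: max_def)

lemma half_iff:
  assumes fin: "finite C" and ne: "C \<noteq> {}"
  shows "(\<forall>v\<in>C. \<bar>X v - t\<bar> \<le> 1/2) \<longleftrightarrow> (mx X C - 1/2 \<le> t \<and> t \<le> nx X C + 1/2)"
proof -
  have f: "finite (X ` C)" "X ` C \<noteq> {}" using fin ne by auto
  have m1: "Max (X ` C) \<le> t + 1/2 \<longleftrightarrow> (\<forall>a\<in>X ` C. a \<le> t + 1/2)" by (rule Max_le_iff[OF f])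
  have m2: "t - 1/2 \<le> Min (X ` C) \<longleftrightarrow> (\<forall>a\<in>X ` C. t - 1/2 \<le> a)" by (rule Min_ge_iff[OF f])
  have aux: "\<bar>a - t\<bar> \<le> 1/2 \<longleftrightarrow> a \<le> t + 1/2 \<and> t - 1/2 \<le> a" for a :: real
    by arith
  have "(\<forall>v\<in>C. \<bar>X v - t\<bar> \<le> 1/2) \<longleftrightarrow> (\<forall>v\<in>C. X v \<le> t + 1/2 \<and> t - 1/2 \<le> X v)"
    using aux by blast
  also have "\<dots> \<longleftrightarrow> (\<forall>a\<in>X ` C. a \<le> t + 1/2) \<and> (\<forall>a\<in>X ` C. t - 1/2 \<le> a)"
    by blast
  also have "\<dots> \<longleftrightarrow> Max (X ` C) \<le> t + 1/2 \<and> t - 1/2 \<le> Min (X ` C)" using m1 m2 by simp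
  also have "\<dots> \<longleftrightarrow> (mx X C - 1/2 \<le> t \<and> t \<le> nx X C + 1/2)" unfolding mx_def nx_def by linarith
  finally show ?thesis .
qed

lemma center_proj:
  assumes r: "realization V E f" and C: "C \<in> max_cliques V E" and finV: "finite V" and ne: "C \<noteq> {}"
  shows "fst ` center f C = {mx (\<lambda>v. fst (f v)) C - 1/2 .. nx (\<lambda>v. fst (f v)) C + 1/2}"
    and "snd ` center f C = {mx (\<lambda>v. snd (f v)) C - 1/2 .. nx (\<lambda>v. snd (f v)) C + 1/2}"
proof -
  define X where "X = (\<lambda>v. fst (f v))"
  define Y where "Y = (\<lambda>v. snd (f v))"
  have rx: "rxy V E X Y" unfolding X_def Y_def by (rule rxy_of_real[OF r])
  have cl: "clique V E C" using C max_clique_clique by blast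
  have fin: "finite C" using cl finV unfolding clique_def by (meson finite_subset)
  have spX: "mx X C \<le> nx X C + 1" using span[OF rx cl fin ne] .
  have spY: "mx Y C \<le> nx Y C + 1" using span[OF rxy_swap[OF rx] cl fin ne] .
  have cen: "p \<in> center f C \<longleftrightarrow> (mx X C - 1/2 \<le> fst p \<and> fst p \<le> nx X C + 1/2) \<and> (mx Y C - 1/2 \<le> snd p \<and> snd p \<le> nx Y C + 1/2)" for p
  proof -
    have "p \<in> center f C \<longleftrightarrow> (\<forall>v\<in>C. \<bar>X v - fst p\<bar> \<le> 1/2) \<and> (\<forall>v\<in>C. \<bar>Y v - snd p\<bar> \<le> 1/2)"
      unfolding center_def dist_inf_def X_def Y_def max.bounded_iff by blast
    then show ?thesis using half_iff[OF fin ne, of X "fst p"] half_iff[OF fin ne, of Y "snd p"] by simp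
  qed
  show "fst ` center f C = {mx (\<lambda>v. fst (f v)) C - 1/2 .. nx (\<lambda>v. fst (f v)) C + 1/2}"
  proof
    show "fst ` center f C \<subseteq> {mx (\<lambda>v. fst (f v)) C - 1/2 .. nx (\<lambda>v. fst (f v)) C + 1/2}"
      using cen unfolding X_def by auto
  next
    show "{mx (\<lambda>v. fst (f v)) C - 1/2 .. nx (\<lambda>v. fst (f v)) C + 1/2} \<subseteq> fst ` center f C"
    proof
      fix t assume t: "t \<in> {mx (\<lambda>v. fst (f v)) C - 1/2 .. nx (\<lambda>v. fst (f v)) C + 1/2}"
      have "(t, mx Y C - 1/2) \<in> center f C" using cen[of "(t, mx Y C - 1/2)"] t spY unfolding X_def by auto
      then show "t \<in> fst ` center f C" by force
    qed
  qed
  show "snd ` center f C = {mx (\<lambda>v. snd (f v)) C - 1/2 .. nx (\<lambda>v. snd (f v)) C + 1/2}"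
  proof
    show "snd ` center f C \<subseteq> {mx (\<lambda>v. snd (f v)) C - 1/2 .. nx (\<lambda>v. snd (f v)) C + 1/2}"
      using cen unfolding Y_def by auto
  next
    show "{mx (\<lambda>v. snd (f v)) C - 1/2 .. nx (\<lambda>v. snd (f v)) C + 1/2} \<subseteq> snd ` center f C"
    proof
      fix t assume t: "t \<in> {mx (\<lambda>v. snd (f v)) C - 1/2 .. nx (\<lambda>v. snd (f v)) C + 1/2}"
      have "(mx X C - 1/2, t) \<in> center f C" using cen[of "(mx X C - 1/2, t)"] t spX unfolding Y_def by auto
      then show "t \<in> snd ` center f C" by force
    qed
  qed
qed

lemma ivl_less:
  fixes a1 b1 a2 b2 :: real
  assumes "a1 \<le> b1" "a2 \<le> b2"
  shows "(\<forall>x\<in>{a1..b1}. \<forall>y\<in>{a2..b2}. x < y) \<longleftrightarrow> b1 < a2"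
proof
  assume H: "\<forall>x\<in>{a1..b1}. \<forall>y\<in>{a2..b2}. x < y"
  have "b1 \<in> {a1..b1}" "a2 \<in> {a2..b2}" using assms by auto
  then show "b1 < a2" using H by blast
next
  assume "b1 < a2"
  then show "\<forall>x\<in>{a1..b1}. \<forall>y\<in>{a2..b2}. x < y" by simp
qed

lemma ivl_neg:
  fixes a1 b1 a2 b2 :: real
  assumes "a1 \<le> b1" "a2 \<le> b2"
  shows "(\<forall>x\<in>(\<lambda>s. -1 * s) ` {a1..b1}. \<forall>y\<in>(\<lambda>s. -1 * s) ` {a2..b2}. x < y) \<longleftrightarrow> b2 < a1"
proof
  assume H: "\<forall>x\<in>(\<lambda>s. -1 * s) ` {a1..b1}. \<forall>y\<in>(\<lambda>s. -1 * s) ` {a2..b2}. x < y"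
  have "a1 \<in> {a1..b1}" "b2 \<in> {a2..b2}" using assms by auto
  then have "-1 * a1 \<in> (\<lambda>s. -1 * s) ` {a1..b1}" "-1 * b2 \<in> (\<lambda>s. -1 * s) ` {a2..b2}" by blast+
  then have "-1 * a1 < -1 * b2" using H by blast
  then show "b2 < a1" by simp
next
  assume h: "b2 < a1"
  show "\<forall>x\<in>(\<lambda>s. -1 * s) ` {a1..b1}. \<forall>y\<in>(\<lambda>s. -1 * s) ` {a2..b2}. x < y"
  proof (intro ballI)
    fix x y assume "x \<in> (\<lambda>s. -1 * s) ` {a1..b1}" "y \<in> (\<lambda>s. -1 * s) ` {a2..b2}"
    then obtain s t where "x = -1 * s" "s \<in> {a1..b1}" "y = -1 * t" "t \<in> {a2..b2}" by blast
    then show "x < y" using h by simp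
  qed
qed

lemma prof_ext:
  assumes cp: "clique_partition V E P" and sp: "simeq_partition V E P Q" and CQ: "\<CC> \<in> Q"
    and Csub: "\<CC> \<subseteq> Inr ` max_cliques V E"
  shows "prof V E {C. Inr C \<in> \<CC>}"
  unfolding prof_def
proof (intro ballI)
  fix v assume v: "v \<in> V"
  have st: "stable_partition (gstar_vertices V E) (gstar_edge V E) Q"
    and rf: "refines Q (base_partition V E P)" using sp unfolding simeq_partition_def by auto
  have pon: "partition_on (gstar_vertices V E) Q" using st unfolding stable_partition_def by auto
  have stc: "\<forall>X\<in>Q. \<forall>Y\<in>Q. \<forall>v\<in>X. \<forall>w\<in>X. card (nbhd (gstar_vertices V E) (gstar_edge V E) v \<inter> Y) = card (nbhd (gstar_vertices V E) (gstar_edge V E) w \<inter> Y)"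
    using st unfolding stable_partition_def by blast
  have "Inl v \<in> gstar_vertices V E" using v unfolding gstar_vertices_def by auto
  then obtain Yb where Yb: "Yb \<in> Q" "Inl v \<in> Yb" using pon unfolding partition_on_def by auto
  obtain B where B: "B \<in> base_partition V E P" "Yb \<subseteq> B" using rf Yb(1) unfolding refines_def by auto
  have "B \<noteq> Inr ` max_cliques V E" using B(2) Yb(2) by auto
  then obtain X0 where X0: "X0 \<in> P" "B = Inl ` X0" using B(1) unfolding base_partition_def by auto
  have clX0: "clique V E X0" using cp X0(1) unfolding clique_partition_def by auto
  define W where "W = {u. Inl u \<in> Yb}"
  have WX0: "W \<subseteq> X0" using B(2) X0(2) unfolding W_def by auto
  have clW: "clique V E W" using clX0 WX0 unfolding clique_def by blast
  have vW: "v \<in> W" unfolding W_def using Yb(2) by simp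
  have nb: "nbhd (gstar_vertices V E) (gstar_edge V E) (Inr C) \<inter> Yb = Inl ` (C \<inter> W)" if CM: "C \<in> max_cliques V E" for C
  proof (rule set_eqI)
    fix z
    show "z \<in> nbhd (gstar_vertices V E) (gstar_edge V E) (Inr C) \<inter> Yb \<longleftrightarrow> z \<in> Inl ` (C \<inter> W)"
    proof
      assume z: "z \<in> nbhd (gstar_vertices V E) (gstar_edge V E) (Inr C) \<inter> Yb"
      then have "z \<in> Inl ` X0" using B(2) X0(2) by auto
      then obtain u where u: "z = Inl u" by auto
      then show "z \<in> Inl ` (C \<inter> W)" using z CM unfolding nbhd_def W_def by auto
    next
      assume "z \<in> Inl ` (C \<inter> W)"
      then obtain u where u: "z = Inl u" "u \<in> C" "Inl u \<in> Yb" unfolding W_def by auto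
      have "u \<in> V" using CM u(2) unfolding max_cliques_def clique_def by auto
      then show "z \<in> nbhd (gstar_vertices V E) (gstar_edge V E) (Inr C) \<inter> Yb"
        using u CM unfolding nbhd_def gstar_vertices_def by auto
    qed
  qed
  have "\<forall>C\<in>{C. Inr C \<in> \<CC>}. \<forall>D\<in>{C. Inr C \<in> \<CC>}. card (C \<inter> W) = card (D \<inter> W)"
  proof (intro ballI)
    fix C D assume "C \<in> {C. Inr C \<in> \<CC>}" "D \<in> {C. Inr C \<in> \<CC>}"
    then have CD: "Inr C \<in> \<CC>" "Inr D \<in> \<CC>" by auto
    then have CM: "C \<in> max_cliques V E" "D \<in> max_cliques V E" using Csub by auto
    have "card (nbhd (gstar_vertices V E) (gstar_edge V E) (Inr C) \<inter> Yb) = card (nbhd (gstar_vertices V E) (gstar_edge V E) (Inr D) \<inter> Yb)"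
      using stc CQ Yb(1) CD by blast
    then have "card ((Inl :: 'a \<Rightarrow> 'a + 'a set) ` (C \<inter> W)) = card ((Inl :: 'a \<Rightarrow> 'a + 'a set) ` (D \<inter> W))"
      using nb[OF CM(1)] nb[OF CM(2)] by simp
    moreover have "card ((Inl :: 'a \<Rightarrow> 'a + 'a set) ` S) = card S" for S by (rule card_image) simp
    ultimately show "card (C \<inter> W) = card (D \<inter> W)" by simp
  qed
  then show "\<exists>W. v \<in> W \<and> clique V E W \<and> (\<forall>C\<in>{C. Inr C \<in> \<CC>}. \<forall>D\<in>{C. Inr C \<in> \<CC>}. card (C \<inter> W) = card (D \<inter> W))"
    using clW vW by blast
qed

theorem mainTheorem13:
  fixes V :: "'a set" and E :: "'a \<Rightarrow> 'a \<Rightarrow> bool" and f :: "'a \<Rightarrow> real \<times> real"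
    and P :: "'a set set" and Q :: "('a + 'a set) set set"
  assumes "graph V E"
    and "realization V E f"
    and "clique_partition V E P"
    and "simeq_partition V E P Q"
    and "\<CC> \<in> Q" and "\<CC> \<subseteq> Inr ` max_cliques V E"
  shows "\<exists>b::real \<in> {-1, 1}. \<forall>C D. Inr C \<in> \<CC> \<longrightarrow> Inr D \<in> \<CC> \<longrightarrow> C \<noteq> D \<longrightarrow>
           ((\<forall>x \<in> fst ` center f C. \<forall>y \<in> fst ` center f D. x < y) \<longleftrightarrow>
            (\<forall>x \<in> (\<lambda>s. b * s) ` (snd ` center f C). \<forall>y \<in> (\<lambda>s. b * s) ` (snd ` center f D). x < y))"
proof -
  have finV: "finite V" using assms(1) unfolding graph_def by blast
  show ?thesis
  proof (cases "V = {}")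
    case True
    then have "max_cliques V E \<subseteq> {{}}" unfolding max_cliques_def clique_def by auto
    then have "\<forall>C D. Inr C \<in> \<CC> \<longrightarrow> Inr D \<in> \<CC> \<longrightarrow> C = D" using assms(6) by blast
    then show ?thesis by (intro bexI[of _ 1]) auto
  next
    case False
    define K where "K = {C. Inr C \<in> \<CC>}"
    have KM: "K \<subseteq> max_cliques V E" using assms(6) unfolding K_def by auto
    have pr: "prof V E K" unfolding K_def by (rule prof_ext[OF assms(3,4,5,6)])
    define X where "X = (\<lambda>v. fst (f v))"
    define Y where "Y = (\<lambda>v. snd (f v))"
    have r: "rxy V E X Y" unfolding X_def Y_def by (rule rxy_of_real[OF assms(2)])
    have ry: "rxy V E Y X" using rxy_swap[OF r] .
    have cX: "fst ` center f C = {mx X C - 1/2 .. nx X C + 1/2}" if "C \<in> K" for C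
      unfolding X_def using center_proj(1)[OF assms(2) _ finV K_ne[OF finV KM pr False that]] that KM by blast
    have cY: "snd ` center f C = {mx Y C - 1/2 .. nx Y C + 1/2}" if "C \<in> K" for C
      unfolding Y_def using center_proj(2)[OF assms(2) _ finV K_ne[OF finV KM pr False that]] that KM by blast
    have spX: "mx X C - 1/2 \<le> nx X C + 1/2" if "C \<in> K" for C
      using K_span[OF finV KM pr False r that] by linarith
    have spY: "mx Y C - 1/2 \<le> nx Y C + 1/2" if "C \<in> K" for C
      using K_span[OF finV KM pr False ry that] by linarith
    have L: "(\<forall>x \<in> fst ` center f C. \<forall>y \<in> fst ` center f D. x < y) \<longleftrightarrow> sep X C D"
      if "C \<in> K" "D \<in> K" for C D
    proof -
      have "(\<forall>x \<in> fst ` center f C. \<forall>y \<in> fst ` center f D. x < y) \<longleftrightarrow> nx X C + 1/2 < mx X D - 1/2"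
        unfolding cX[OF that(1)] cX[OF that(2)] by (rule ivl_less[OF spX[OF that(1)] spX[OF that(2)]])
      then show ?thesis unfolding sep_def by linarith
    qed
    have R1: "(\<forall>x \<in> (\<lambda>s. 1 * s) ` (snd ` center f C). \<forall>y \<in> (\<lambda>s. 1 * s) ` (snd ` center f D). x < y) \<longleftrightarrow> sep Y C D"
      if "C \<in> K" "D \<in> K" for C D
    proof -
      have "(\<forall>x \<in> snd ` center f C. \<forall>y \<in> snd ` center f D. x < y) \<longleftrightarrow> nx Y C + 1/2 < mx Y D - 1/2"
        unfolding cY[OF that(1)] cY[OF that(2)] by (rule ivl_less[OF spY[OF that(1)] spY[OF that(2)]])
      then show ?thesis unfolding sep_def by (simp add: add.commute)
    qed
    have R2: "(\<forall>x \<in> (\<lambda>s. -1 * s) ` (snd ` center f C). \<forall>y \<in> (\<lambda>s. -1 * s) ` (snd ` center f D). x < y) \<longleftrightarrow> sep Y D C"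
      if "C \<in> K" "D \<in> K" for C D
    proof -
      have "(\<forall>x \<in> (\<lambda>s. -1 * s) ` (snd ` center f C). \<forall>y \<in> (\<lambda>s. -1 * s) ` (snd ` center f D). x < y) \<longleftrightarrow> nx Y D + 1/2 < mx Y C - 1/2"
        unfolding cY[OF that(1)] cY[OF that(2)] by (rule ivl_neg[OF spY[OF that(1)] spY[OF that(2)]])
      then show ?thesis unfolding sep_def by linarith
    qed
    show ?thesis
    proof (cases "\<exists>C\<in>K. \<exists>D\<in>K. C \<noteq> D \<and> \<not> conc X Y C D")
      case True
      then obtain C0 D0 where CD0: "C0 \<in> K" "D0 \<in> K" "C0 \<noteq> D0" "\<not> conc X Y C0 D0" by blast
      show ?thesis
      proof (intro bexI[of _ "-1"] allI impI)
        fix C D assume h: "Inr C \<in> \<CC>" "Inr D \<in> \<CC>" "C \<noteq> D"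
        then have CK: "C \<in> K" "D \<in> K" unfolding K_def by auto
        have "\<not> conc X Y C D" using conc_all[OF finV KM pr False r CK(1) CK(2) CD0(1) CD0(2) h(3) CD0(3)] CD0(4) by blast
        moreover have "sep Y C D \<or> sep Y D C" using pair_sepY[OF finV KM pr False r CK h(3)] .
        moreover have "sep Y C D \<Longrightarrow> \<not> sep Y D C" using sep_asym[OF finV KM pr False ry CK] by blast
        ultimately have "sep X C D \<longleftrightarrow> sep Y D C" using conc_def[of X Y C D] by blast
        then show "(\<forall>x \<in> fst ` center f C. \<forall>y \<in> fst ` center f D. x < y) \<longleftrightarrow>
            (\<forall>x \<in> (\<lambda>s. -1 * s) ` (snd ` center f C). \<forall>y \<in> (\<lambda>s. -1 * s) ` (snd ` center f D). x < y)"
          using L[OF CK] R2[OF CK] by simp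
      qed simp
    next
      case False2: False
      show ?thesis
      proof (intro bexI[of _ "1"] allI impI)
        fix C D assume h: "Inr C \<in> \<CC>" "Inr D \<in> \<CC>" "C \<noteq> D"
        then have CK: "C \<in> K" "D \<in> K" unfolding K_def by auto
        have "conc X Y C D" using False2 CK h(3) by blast
        then have "sep X C D \<longleftrightarrow> sep Y C D" using conc_def[of X Y C D] by blast
        then show "(\<forall>x \<in> fst ` center f C. \<forall>y \<in> fst ` center f D. x < y) \<longleftrightarrow>
            (\<forall>x \<in> (\<lambda>s. 1 * s) ` (snd ` center f C). \<forall>y \<in> (\<lambda>s. 1 * s) ` (snd ` center f D). x < y)"
          using L[OF CK] R1[OF CK] by simp
      qed simp
    qed
  qed
qed

end
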